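(* Let $g>\tfrac12$, $M_{\mathrm{I}},M_{\mathrm{II}}\in\mathbb{Z}_{\ge0}$, $M=M_{\mathrm{I}}+M_{\mathrm{II}}$, $M'=\frac12(M_{\mathrm{I}}-M_{\mathrm{II}})$, let $\mathcal{D}=((d_1,t_1),\ldots,(d_M,t_M))$ be an ordered list of pairwise distinct seed labels as in the context with $M_{\mathrm{I}}$ of Type I and $M_{\mathrm{II}}$ of Type II, and let $n\in\mathbb{Z}_{\ge0}$. For a seed label $(\mathrm{v},t)$ set $\xi_{(\mathrm{v},\mathrm{I})}(\eta)=L^{(g-\frac12)}_{\mathrm{v}}(-\eta)$, $\xi_{(\mathrm{v},\mathrm{II})}(\eta)=L^{(\frac12-g)}_{\mathrm{v}}(\eta)$, $\tilde{\mathcal{E}}_{(\mathrm{v},\mathrm{I})}=-4(g+\mathrm{v}+\frac12)$, $\tilde{\mathcal{E}}_{(\mathrm{v},\mathrm{II})}=-4(g-\mathrm{v}-\frac12)$, $\tilde\zeta_{(\mathrm{v},\mathrm{I})}(\eta)=2\eta L^{(g+\frac12)}_{\mathrm{v}}(-\eta)$, $\tilde\zeta_{(\mathrm{v},\mathrm{II})}(\eta)=-2(g-\frac12-\mathrm{v})L^{(-g-\frac12)}_{\mathrm{v}}(\eta)$, and set $\mathcal{E}_n=4n$, $\zeta_n(\eta)=-2\eta L^{(g+\frac12)}_{n-1}(\eta)$. Define the $(M+1)\times(M+1)$ matrix $(a_{j,k})$ by: for $1\le k\le M$, $a_{2l-1,k}=(-\tilde{\mathcal{E}}_{(d_k,t_k)})^{l-1}\xi_{(d_k,t_k)}(\eta)$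 and $a_{2l,k}=(-\tilde{\mathcal{E}}_{(d_k,t_k)})^{l-1}\tilde\zeta_{(d_k,t_k)}(\eta)$; and $a_{2l-1,M+1}=(-\mathcal{E}_n)^{l-1}L^{(g-\frac12)}_n(\eta)$, $a_{2l,M+1}=(-\mathcal{E}_n)^{l-1}\zeta_n(\eta)$ (for $1\le l\le[\frac{M+2}{2}]$ in odd rows and $1\le l\le[\frac{M+1}{2}]$ in even rows). Define the $M\times M$ matrix $(b_{j,k})$ by $b_{2l-1,k}=(-\tilde{\mathcal{E}}_{(d_k,t_k)})^{l-1}\xi_{(d_k,t_k)}(\eta)$, $1\le l\le[\frac{M+1}{2}]$, and $b_{2l,k}=(-\tilde{\mathcal{E}}_{(d_k,t_k)})^{l-1}\tilde\zeta_{(d_k,t_k)}(\eta)$, $1\le l\le[\frac M2]$. Then for $\eta>0$, $$P_{\mathcal{D},n}(\eta)=2^{-\frac12M(M+1)}\det(a_{j,k})_{1\le j,k\le M+1}\;\eta^{-([M']+1)([M']+M-2[\frac M2])},$$ $$\Xi_{\mathcal{D}}(\eta)=2^{-\frac12M(M-1)}\det(b_{j,k})_{1\le j,k\le M}\;\eta^{-[M']([M']+M-2[\frac M2])}.$$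
   Context: $[a]$ denotes the greatest integer not exceeding $a$, and $[a]'$ the greatest integer strictly less than $a$. $(a)_k=a(a+1)\cdots(a+k-1)$, $(a)_0=1$. For real $\alpha$ and $m\in\mathbb{Z}_{\ge0}$, $L^{(\alpha)}_m(\eta)=\frac{1}{m!}\sum_{k=0}^m\frac{(-m)_k}{k!}(\alpha+k+1)_{m-k}\eta^k$, and $L^{(\alpha)}_m\equiv0$ for $m<0$. Fix $g>\frac12$. A seed label is a pair $(\mathrm{v},t)$ with $t\in\{\mathrm{I},\mathrm{II}\}$, $\mathrm{v}\in\mathbb{Z}_{\ge0}$ if $t=\mathrm{I}$ and $\mathrm{v}\in\{0,1,\ldots,[g-\frac12]'\}$ if $t=\mathrm{II}$. For $\eta>0$ let $\mu_{(\mathrm{v},\mathrm{I})}(\eta)=e^{\eta}L^{(g-\frac12)}_{\mathrm{v}}(-\eta)$, $\mu_{(\mathrm{v},\mathrm{II})}(\eta)=\eta^{\frac12-g}L^{(\frac12-g)}_{\mathrm{v}}(\eta)$, $P_n(\eta)=L^{(g-\frac12)}_n(\eta)$, and $\mathrm{W}[f_1,\ldots,f_m](\eta)=\det\big(\frac{d^{j-1}f_k}{d\eta^{j-1}}\big)_{1\le j,k\le m}$. For $\mathcal{D}$ as in the claim, $\Xi_{\mathcal{D}}(\eta)=\mathrm{W}[\mu_{(d_1,t_1)},\ldots,\mu_{(d_M,t_M)}](\eta)\,\eta^{(M_{\mathrm{I}}+g-\frac12)M_{\mathrm{II}}}e^{-M_{\mathrm{I}}\eta}$ and $P_{\mathcal{D},n}(\eta)=\mathrm{W}[\mu_{(d_1,t_1)},\ldots,\mu_{(d_M,t_M)},P_n](\eta)\,\eta^{(M_{\mathrm{I}}+g+\frac12)M_{\mathrm{II}}}e^{-M_{\mathrm{I}}\eta}$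 (the multi-indexed Laguerre polynomials). *)

theory Defs
  imports "HOL-Analysis.Analysis"
begin

text \<open>Generalized Laguerre polynomial with real parameter alpha and integer degree m;
  identically zero for negative degree.\<close>
definition lag :: "real \<Rightarrow> int \<Rightarrow> real \<Rightarrow> real" where
  "lag \<alpha> m \<eta> = (if m < 0 then 0 else
     (1 / fact (nat m)) * (\<Sum>k=0..nat m. (pochhammer (- real (nat m)) k / fact k)
        * pochhammer (\<alpha> + real k + 1) (nat m - k) * \<eta> ^ k))"

definition detm :: "nat \<Rightarrow> (nat \<Rightarrow> nat \<Rightarrow> real) \<Rightarrow> real" where
  "detm m A = (\<Sum>p | p permutes {..<m}. of_int (sign p) * (\<Prod>i<m. A i (p i)))"

definition wronskian :: "(real \<Rightarrow> real) list \<Rightarrow> real \<Rightarrow> real" where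
  "wronskian fs \<eta> = detm (length fs) (\<lambda>j k. (deriv ^^ j) (fs ! k) \<eta>)"

datatype stype = TI | TII

type_synonym seed = "nat \<times> stype"

text \<open>Valid seed label for parameter g: type II requires v \<in> {0,..,[g-1/2]'},
  where [a]' = greatest integer strictly less than a = ceiling a - 1.\<close>
definition valid_seed :: "real \<Rightarrow> seed \<Rightarrow> bool" where
  "valid_seed g s = (case s of (v, TI) \<Rightarrow> True
      | (v, TII) \<Rightarrow> int v \<le> \<lceil>g - 1/2\<rceil> - 1)"

definition MI :: "seed list \<Rightarrow> nat" where
  "MI D = length (filter (\<lambda>s. snd s = TI) D)"

definition MII :: "seed list \<Rightarrow> nat" where
  "MII D = length (filter (\<lambda>s. snd s = TII) D)"

definition mu :: "real \<Rightarrow> seed \<Rightarrow> real \<Rightarrow> real" where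
  "mu g s \<eta> = (case s of (v, TI) \<Rightarrow> exp \<eta> * lag (g - 1/2) (int v) (- \<eta>)
      | (v, TII) \<Rightarrow> \<eta> powr (1/2 - g) * lag (1/2 - g) (int v) \<eta>)"

definition Pn :: "real \<Rightarrow> nat \<Rightarrow> real \<Rightarrow> real" where
  "Pn g n \<eta> = lag (g - 1/2) (int n) \<eta>"

definition Xi :: "real \<Rightarrow> seed list \<Rightarrow> real \<Rightarrow> real" where
  "Xi g D \<eta> = wronskian (map (mu g) D) \<eta>
      * \<eta> powr ((real (MI D) + g - 1/2) * real (MII D)) * exp (- real (MI D) * \<eta>)"

definition PD :: "real \<Rightarrow> seed list \<Rightarrow> nat \<Rightarrow> real \<Rightarrow> real" where
  "PD g D n \<eta> = wronskian (map (mu g) D @ [Pn g n]) \<eta>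
      * \<eta> powr ((real (MI D) + g + 1/2) * real (MII D)) * exp (- real (MI D) * \<eta>)"

definition xi :: "real \<Rightarrow> seed \<Rightarrow> real \<Rightarrow> real" where
  "xi g s \<eta> = (case s of (v, TI) \<Rightarrow> lag (g - 1/2) (int v) (- \<eta>)
      | (v, TII) \<Rightarrow> lag (1/2 - g) (int v) \<eta>)"

definition Etil :: "real \<Rightarrow> seed \<Rightarrow> real" where
  "Etil g s = (case s of (v, TI) \<Rightarrow> -4 * (g + real v + 1/2)
      | (v, TII) \<Rightarrow> -4 * (g - real v - 1/2))"

definition zetatil :: "real \<Rightarrow> seed \<Rightarrow> real \<Rightarrow> real" where
  "zetatil g s \<eta> = (case s of (v, TI) \<Rightarrow> 2 * \<eta> * lag (g + 1/2) (int v) (- \<eta>)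
      | (v, TII) \<Rightarrow> -2 * (g - 1/2 - real v) * lag (-g - 1/2) (int v) \<eta>)"

definition En :: "nat \<Rightarrow> real" where "En n = 4 * real n"

definition zetan :: "real \<Rightarrow> nat \<Rightarrow> real \<Rightarrow> real" where
  "zetan g n \<eta> = -2 * \<eta> * lag (g + 1/2) (int n - 1) \<eta>"

text \<open>Matrix (a_{j,k}), 0-based: row i corresponds to j = i+1. Odd j = 2l-1 (even i, l-1 = i div 2)
  gives xi-type entries, even j = 2l (odd i, l-1 = i div 2) gives zeta-type entries.\<close>
definition amat :: "real \<Rightarrow> seed list \<Rightarrow> nat \<Rightarrow> real \<Rightarrow> nat \<Rightarrow> nat \<Rightarrow> real" where
  "amat g D n \<eta> i k = (if k < length D then
       (- Etil g (D ! k)) ^ (i div 2) * (if even i then xi g (D ! k) \<eta> else zetatil g (D ! k) \<eta>)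
     else
       (- En n) ^ (i div 2) * (if even i then lag (g - 1/2) (int n) \<eta> else zetan g n \<eta>))"

definition bmat :: "real \<Rightarrow> seed list \<Rightarrow> real \<Rightarrow> nat \<Rightarrow> nat \<Rightarrow> real" where
  "bmat g D \<eta> i k =
       (- Etil g (D ! k)) ^ (i div 2) * (if even i then xi g (D ! k) \<eta> else zetatil g (D ! k) \<eta>)"

end

theory Submission
  imports Defs "Jordan_Normal_Form.Determinant" "HOL-Computational_Algebra.Polynomial"
begin


definition cf :: "real \<Rightarrow> int \<Rightarrow> nat \<Rightarrow> real" where
 "cf a m k = (if int k \<le> m then (-1)^k * ((a + of_int m) gchoose (nat m - k)) / fact k else 0)"

definition LP :: "real \<Rightarrow> int \<Rightarrow> real poly" where
 "LP a m = (\<Sum>k\<le>nat m. Polynomial.monom (cf a m k) k)"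

lemma coeff_LP: "coeff (LP a m) i = cf a m i"
  unfolding LP_def by (auto simp: coeff_sum cf_def)

lemma cf_neg: "m < 0 \<Longrightarrow> cf a m i = 0"
  by (simp add: cf_def)

lemma cf_int: "cf a (int n) i = (if i \<le> n then (-1)^i * ((a + real n) gchoose (n - i)) / fact i else 0)"
  by (simp add: cf_def)

lemma cf_pred: "cf a (int n - 1) i = (if i < n then (-1)^i * ((a + real n - 1) gchoose (n - 1 - i)) / fact i else 0)"
  by (auto simp: cf_def nat_diff_distrib add_diff_eq)

lemma fact_Suc_div: "(x::real) / fact (Suc j) = x / (real (Suc j)) / fact j"
  by (simp add: fact_Suc divide_divide_eq_left mult.commute)

lemma poch_neg: "k \<le> m \<Longrightarrow> pochhammer (- real m) k = (-1)^k * fact k * real (m choose k)"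
proof -
  assume "k \<le> m"
  have "pochhammer (- real m) k = (-1)^k * pochhammer (real m - of_nat k + 1) k"
    by (rule pochhammer_minus)
  also have "pochhammer (real m - of_nat k + 1) k = (real m gchoose k) * fact k"
    by (simp add: gbinomial_pochhammer')
  also have "(real m gchoose k) = real (m choose k)"
    by (simp add: binomial_gbinomial)
  finally show ?thesis by simp
qed

lemma lag_term:
  assumes "k \<le> m"
  shows "1 / fact m * (pochhammer (- real m) k / fact k * pochhammer (a + real k + 1) (m - k) * y ^ k)
    = (-1)^k * ((a + real m) gchoose (m - k)) / fact k * y ^ k"
proof -
  have g: "((a + real m) gchoose (m - k)) = pochhammer (a + real k + 1) (m - k) / fact (m - k)"
    using assms by (simp add: gbinomial_pochhammer' of_nat_diff)
  have b: "real (m choose k) = fact m / (fact k * fact (m - k))"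
    using assms by (simp add: binomial_fact)
  show ?thesis unfolding g poch_neg[OF assms] b
    by (simp add: field_simps)
qed

lemma lag_LP: "lag a m y = poly (LP a m) y"
proof (cases "m < 0")
  case True
  then show ?thesis by (simp add: lag_def LP_def cf_def)
next
  case False
  then obtain n where n: "m = int n" by (metis nonneg_int_cases not_less)
  have "lag a m y = 1 / fact n * (\<Sum>k=0..n. pochhammer (- real n) k / fact k * pochhammer (a + real k + 1) (n - k) * y ^ k)"
    by (simp add: lag_def n)
  also have "\<dots> = (\<Sum>k=0..n. 1 / fact n * (pochhammer (- real n) k / fact k * pochhammer (a + real k + 1) (n - k) * y ^ k))"
    by (rule sum_distrib_left)
  also have "\<dots> = (\<Sum>k=0..n. cf a m k * y^k)"
    by (rule sum.cong[OF refl], subst lag_term, auto simp: cf_int n)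
  also have "\<dots> = poly (LP a m) y"
    by (simp add: LP_def poly_sum poly_monom n atLeast0AtMost)
  finally show ?thesis .
qed

lemma LP_deriv: "pderiv (LP a m) = - LP (a+1) (m-1)"
proof (rule poly_eqI)
  fix i
  show "coeff (pderiv (LP a m)) i = coeff (- LP (a+1) (m-1)) i"
  proof (cases "m < 0")
    case True then show ?thesis by (simp add: coeff_pderiv coeff_LP cf_neg)
  next
    case False
    then obtain n where n: "m = int n" by (metis nonneg_int_cases not_less)
    show ?thesis
    proof (cases "i < n")
      case True
      then obtain t where t: "n - i = Suc t" "n - 1 - i = t" by (metis Suc_diff_Suc diff_Suc_1 diff_commute less_imp_Suc_add add_diff_cancel_left')
      have "real (Suc i) * ((-1)^Suc i * ((a + real n) gchoose (n - Suc i)) / fact (Suc i))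
          = - ((-1)^i * ((a + 1 + real n - 1) gchoose (n - 1 - i)) / fact i)"
        using t by (simp add: fact_Suc_div)
      then show ?thesis using True by (simp add: coeff_pderiv coeff_LP cf_int cf_pred n)
    next
      case False
      then show ?thesis by (simp add: coeff_pderiv coeff_LP cf_int cf_pred n)
    qed
  qed
qed

lemma LP_L2: "LP (a+1) m = LP a m + LP (a+1) (m-1)"
proof (rule poly_eqI)
  fix i
  show "coeff (LP (a+1) m) i = coeff (LP a m + LP (a+1) (m-1)) i"
  proof (cases "m < 0")
    case True then show ?thesis by (simp add: coeff_LP cf_neg)
  next
    case False
    then obtain n where n: "m = int n" by (metis nonneg_int_cases not_less)
    show ?thesis
    proof (cases "i < n")
      case True
      then obtain t where t: "n - i = Suc t" "n - 1 - i = t" by (metis Suc_diff_Suc diff_Suc_1 diff_commute less_imp_Suc_add add_diff_cancel_left')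
      have "(a + 1 + real n) gchoose Suc t = ((a + real n) gchoose t) + ((a + real n) gchoose Suc t)"
        using gbinomial_Suc_Suc[of "a + real n" t] by (simp add: add_ac)
      then show ?thesis using True t by (simp add: coeff_LP cf_int cf_pred n add_divide_distrib algebra_simps)
    next
      case False
      then show ?thesis by (auto simp: coeff_LP cf_int cf_pred n)
    qed
  qed
qed

lemma sgn_fact_Suc: "(-1::real)^Suc j * X / fact (Suc j) = - ((-1)^j * X / ((1 + real j) * fact j))"
  by (simp add: fact_Suc)

lemma alg3: "(F::real) \<noteq> 0 \<Longrightarrow> c \<noteq> 0 \<Longrightarrow> (a + c) * G = A * H \<Longrightarrow>
   a * (- (s * G / (c * F))) - s * G / F = A * (- (s * H / (c * F)))"
proof -
  assume F: "F \<noteq> 0" and c: "c \<noteq> 0" and h: "(a + c) * G = A * H"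
  have "a * (- (s * G / (c * F))) - s * G / F = - (s * ((a + c) * G) / (c * F))"
    using F c by (simp add: field_simps)
  also have "\<dots> = A * (- (s * H / (c * F)))" using h by simp
  finally show ?thesis .
qed

lemma LP_L3: "Polynomial.smult a (LP a m) - pCons 0 (LP (a+1) (m-1)) = Polynomial.smult (a + of_int m) (LP (a-1) m)"
proof (rule poly_eqI)
  fix i
  show "coeff (Polynomial.smult a (LP a m) - pCons 0 (LP (a+1) (m-1))) i = coeff (Polynomial.smult (a + of_int m) (LP (a-1) m)) i"
  proof (cases "m < 0")
    case True then show ?thesis by (cases i) (simp_all add: coeff_LP cf_neg coeff_pCons)
  next
    case False
    then obtain n where n: "m = int n" by (metis nonneg_int_cases not_less)
    show ?thesis
    proof (cases "i \<le> n")
      case False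
      then show ?thesis by (cases i) (auto simp: coeff_LP cf_int cf_pred n coeff_pCons)
    next
      case True
      define G where "G = (a + real n) gchoose (n - i)"
      define H where "H = (a - 1 + real n) gchoose (n - i)"
      have ab: "(a + real i) * G = (a + real n) * H"
        using gbinomial_absorb_comp[of "a + real n" "n - i"] True unfolding G_def H_def
        by (simp add: of_nat_diff algebra_simps)
      show ?thesis
      proof (cases i)
        case 0
        then show ?thesis using True ab by (simp add: coeff_LP cf_int n coeff_pCons G_def H_def)
      next
        case (Suc j)
        have e: "n - 1 - j = n - i" using True Suc by auto
        have c1: "coeff (LP a m) i = - ((-1)^j * G / ((1 + real j) * fact j))"
          using True Suc by (simp add: coeff_LP cf_int n G_def sgn_fact_Suc)
        have c2: "coeff (pCons 0 (LP (a+1) (m-1))) i = (-1)^j * G / fact j"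
          using True Suc e by (simp add: coeff_LP cf_pred n G_def coeff_pCons)
        have c3: "coeff (LP (a-1) m) i = - ((-1)^j * H / ((1 + real j) * fact j))"
          using True Suc by (simp add: coeff_LP cf_int n H_def sgn_fact_Suc add_ac)
        have ab': "(a + (1 + real j)) * G = (a + real n) * H" using ab Suc by (simp add: add_ac)
        have cz: "1 + real j \<noteq> 0" by (simp add: add_nonneg_eq_0_iff)
        show ?thesis
          unfolding coeff_diff coeff_smult c1 c2 c3
          using alg3[OF _ cz ab', of "fact j" "(-1)^j"] by (simp add: n)
      qed
    qed
  qed
qed

lemma alg4: "(F::real) \<noteq> 0 \<Longrightarrow> c \<noteq> 0 \<Longrightarrow> (real t + 1) * G = A * H \<Longrightarrow> N = c + real t + 1 \<Longrightarrow>
   N * (- (s * G / (c * F))) = A * (- (s * H / (c * F))) - s * G / F"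
proof -
  assume F: "F \<noteq> 0" and c: "c \<noteq> 0" and h: "(real t + 1) * G = A * H" and N: "N = c + real t + 1"
  have "A * (- (s * H / (c * F))) - s * G / F = - (s * (A * H + c * G) / (c * F))"
    using F c by (simp add: field_simps)
  also have "\<dots> = N * (- (s * G / (c * F)))" unfolding h[symmetric] N
    using F c by (simp add: field_simps)
  finally show ?thesis by simp
qed

lemma LP_L4: "Polynomial.smult (of_int m) (LP a m) = Polynomial.smult (a + of_int m) (LP a (m-1)) - pCons 0 (LP (a+1) (m-1))"
proof (rule poly_eqI)
  fix i
  show "coeff (Polynomial.smult (of_int m) (LP a m)) i = coeff (Polynomial.smult (a + of_int m) (LP a (m-1)) - pCons 0 (LP (a+1) (m-1))) i"
  proof (cases "m < 0")
    case True then show ?thesis by (cases i) (simp_all add: coeff_LP cf_neg coeff_pCons)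
  next
    case False
    then obtain n where n: "m = int n" by (metis nonneg_int_cases not_less)
    show ?thesis
    proof (cases "i < n")
      case False
      show ?thesis
      proof (cases "i = n")
        case True
        show ?thesis
        proof (cases n)
          case 0 then show ?thesis using True by (simp add: coeff_LP cf_int cf_neg n coeff_pCons)
        next
          case (Suc k)
          have c1: "coeff (LP a m) i = (-1)^n / fact n"
            using True by (simp add: coeff_LP cf_int n)
          have c2: "coeff (pCons 0 (LP (a+1) (m-1))) i = (-1)^k / fact k"
            using True Suc by (simp add: coeff_LP cf_pred cf_int n coeff_pCons)
          have c3: "coeff (LP a (m-1)) i = 0"
            using True by (simp add: coeff_LP cf_pred n)
          have j: "1 + real k \<noteq> 0" by (simp add: add_nonneg_eq_0_iff)
          have "real (Suc k) * ((-1)^Suc k * 1 / fact (Suc k)) = - ((-1)^k / fact k)"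
            unfolding sgn_fact_Suc using j by simp
          then show ?thesis unfolding coeff_diff coeff_smult c1 c2 c3 by (simp add: n Suc)
        qed
      next
        case False
        with \<open>\<not> i < n\<close> show ?thesis by (cases i) (auto simp: coeff_LP cf_int cf_pred n coeff_pCons)
      qed
    next
      case True
      then obtain t where t: "n - i = Suc t" "n - 1 - i = t" by (metis Suc_diff_Suc diff_Suc_1 diff_commute less_imp_Suc_add add_diff_cancel_left')
      define G where "G = (a + real n) gchoose Suc t"
      define H where "H = (a + real n - 1) gchoose t"
      have ab: "(real t + 1) * G = (a + real n) * H"
        using gbinomial_absorption[of t "a + real n"] unfolding G_def H_def by (simp add: add_ac)
      have mi: "real n = real i + real t + 1" using t True by linarith
      show ?thesis
      proof (cases i)
        case 0
        have c1: "coeff (LP a m) i = G" unfolding coeff_LP n cf_int using 0 t(1) by (simp add: G_def)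
        have c3: "coeff (LP a (m-1)) i = H" using 0 t(2) True by (simp add: coeff_LP cf_pred n H_def)
        have c2: "coeff (pCons 0 (LP (a+1) (m-1))) i = 0" using 0 by simp
        show ?thesis unfolding coeff_diff coeff_smult c1 c2 c3 using ab mi 0 by (simp add: n)
      next
        case (Suc k)
        have e: "n - 1 - k = Suc t" using t Suc by auto
        have cz: "1 + real k \<noteq> 0" by (simp add: add_nonneg_eq_0_iff)
        have c1: "coeff (LP a m) i = - ((-1)^k * G / ((1 + real k) * fact k))"
          using True Suc t by (simp add: coeff_LP cf_int n G_def sgn_fact_Suc)
        have c2: "coeff (pCons 0 (LP (a+1) (m-1))) i = (-1)^k * G / fact k"
          using True Suc e by (simp add: coeff_LP cf_pred n G_def coeff_pCons)
        have c3: "coeff (LP a (m-1)) i = - ((-1)^k * H / ((1 + real k) * fact k))"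
          using True Suc t by (simp add: coeff_LP cf_pred n H_def sgn_fact_Suc)
        show ?thesis
          unfolding coeff_diff coeff_smult c1 c2 c3
          using alg4[OF _ cz ab, of "fact k" "of_int m" "(-1)^k"] mi Suc by (simp add: n)
      qed
    qed
  qed
qed



definition Bv :: "real \<Rightarrow> (real \<Rightarrow> real) \<Rightarrow> (real \<Rightarrow> real) \<Rightarrow> nat \<Rightarrow> real \<Rightarrow> real" where
  "Bv e f f1 s x = e^(s div 2) * (if even s then f x else f1 x)"

primrec Q :: "real \<Rightarrow> nat \<Rightarrow> nat \<Rightarrow> real poly" where
  "Q al 0 s = (if s = 0 then 1 else 0)"
| "Q al (Suc j) s = pCons 0 (pderiv (Q al j s)) - Polynomial.smult (of_nat j) (Q al j s)
     + (if s = 0 then 0 else if even s then - Q al j (s-1) else pCons 0 (Q al j (s-1)))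
     + (if odd s then [:-al-1, 1:] * Q al j s else 0)"

definition Tc :: "real \<Rightarrow> nat \<Rightarrow> nat \<Rightarrow> real \<Rightarrow> real" where
  "Tc al j s x = poly (Q al j s) x / x^j"

definition GG :: "real \<Rightarrow> real \<Rightarrow> (real \<Rightarrow> real) \<Rightarrow> (real \<Rightarrow> real) \<Rightarrow> nat \<Rightarrow> real \<Rightarrow> real" where
  "GG al e f f1 j x = (\<Sum>s<Suc j. Tc al j s x * Bv e f f1 s x)"

lemma Q_zero: "j < s \<Longrightarrow> Q al j s = 0"
  by (induction j arbitrary: s) auto

lemma Tc_zero: "j < s \<Longrightarrow> Tc al j s x = 0"
  by (simp add: Tc_def Q_zero)

lemma Q_diag: "poly (Q al j j) x = (-1)^(j div 2) * x^((j+1) div 2)"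
proof (induction j)
  case 0 then show ?case by simp
next
  case (Suc j)
  have z: "Q al j (Suc j) = 0" by (simp add: Q_zero)
  show ?case
  proof (cases "even j")
    case True
    then have "Suc j div 2 = j div 2" "(Suc j + 1) div 2 = Suc ((j+1) div 2)" by presburger+
    then show ?thesis using True Suc z by simp
  next
    case False
    then have "Suc j div 2 = Suc (j div 2)" "(Suc j + 1) div 2 = (j+1) div 2" by presburger+
    then show ?thesis using False Suc z by simp
  qed
qed

lemma Tc_deriv:
  assumes "x > 0"
  shows "((\<lambda>x. Tc al j s x) has_real_derivative
     poly (pCons 0 (pderiv (Q al j s)) - Polynomial.smult (of_nat j) (Q al j s)) x / x^Suc j) (at x)"
proof -
  have "((\<lambda>x. poly (Q al j s) x / x^j) has_real_derivative
     (poly (pderiv (Q al j s)) x * x^j - poly (Q al j s) x * (real j * x^(j - Suc 0))) / (x^j * x^j)) (at x)"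
    using assms by (intro DERIV_divide poly_DERIV DERIV_pow) auto
  moreover have "(poly (pderiv (Q al j s)) x * x^j - poly (Q al j s) x * (real j * x^(j - Suc 0))) / (x^j * x^j)
     = poly (pCons 0 (pderiv (Q al j s)) - Polynomial.smult (of_nat j) (Q al j s)) x / x^Suc j"
  proof (cases j)
    case 0 then show ?thesis using assms by simp
  next
    case (Suc k)
    then show ?thesis using assms by (simp add: field_simps power_Suc)
  qed
  ultimately show ?thesis unfolding Tc_def by simp
qed

lemma Tc_Suc:
  assumes "x \<noteq> 0"
  shows "Tc al (Suc j) s x = poly (pCons 0 (pderiv (Q al j s)) - Polynomial.smult (of_nat j) (Q al j s)) x / x^Suc j
     + (if odd s then (x - al - 1) / x * Tc al j s x else 0)
     + (if s = 0 then 0 else if even s then - Tc al j (s-1) x / x else Tc al j (s-1) x)"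
  using assms by (auto simp: Tc_def field_simps power_Suc)

locale col =
  fixes al e :: real and f f1 :: "real \<Rightarrow> real"
  assumes d1: "\<And>x. x > 0 \<Longrightarrow> (f has_real_derivative f1 x) (at x)"
    and d2: "\<And>x. x > 0 \<Longrightarrow> (f1 has_real_derivative ((x - al - 1) * f1 x - e * f x) / x) (at x)"
begin

lemma Bv_deriv:
  assumes "x > 0"
  shows "((\<lambda>x. Bv e f f1 s x) has_real_derivative
    (if even s then Bv e f f1 (Suc s) x else (x - al - 1) / x * Bv e f f1 s x - Bv e f f1 (Suc s) x / x)) (at x)"
proof (cases "even s")
  case True
  have "((\<lambda>x. e^(s div 2) * f x) has_real_derivative e^(s div 2) * f1 x) (at x)"
    using d1[OF assms] by (rule DERIV_cmult)
  moreover have "Suc s div 2 = s div 2" using True by presburger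
  ultimately show ?thesis using True by (simp add: Bv_def)
next
  case False
  have fn: "(\<lambda>x. Bv e f f1 s x) = (\<lambda>x. e^(s div 2) * f1 x)" using False by (simp add: Bv_def fun_eq_iff)
  have sd: "Suc s div 2 = Suc (s div 2)" using False by presburger
  have val: "(if even s then Bv e f f1 (Suc s) x else (x - al - 1) / x * (e^(s div 2) * f1 x) - Bv e f f1 (Suc s) x / x)
     = e^(s div 2) * (((x - al - 1) * f1 x - e * f x) / x)"
    using False sd assms by (simp add: Bv_def field_simps)
  show ?thesis unfolding fn val by (rule DERIV_cmult[OF d2[OF assms]])
qed

lemma prod_rule: "(g has_real_derivative A) (at x) \<Longrightarrow> (h has_real_derivative B) (at x) \<Longrightarrow>
   ((\<lambda>x. g x * h x) has_real_derivative A * h x + g x * B) (at x)"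
proof -
  assume a1: "(g has_real_derivative A) (at x)" and a2: "(h has_real_derivative B) (at x)"
  have "((\<lambda>x. g x * h x) has_real_derivative A * h x + B * g x) (at x)" by (rule DERIV_mult[OF a1 a2])
  then show ?thesis by (simp only: mult.commute[of B "g x"])
qed

lemma GG_deriv:
  assumes x: "x > 0"
  shows "((\<lambda>x. GG al e f f1 j x) has_real_derivative GG al e f f1 (Suc j) x) (at x)"
proof -
  define B where "B = (\<lambda>s. Bv e f f1 s x)"
  define D where "D = (\<lambda>s. poly (pCons 0 (pderiv (Q al j s)) - Polynomial.smult (of_nat j) (Q al j s)) x / x^Suc j)"
  define P where "P = (\<lambda>s. if odd s then (x - al - 1) / x * Tc al j s x else 0)"
  have "((\<lambda>x. GG al e f f1 j x) has_real_derivative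
     (\<Sum>s<Suc j. D s * B s + Tc al j s x * (if even s then B (Suc s) else (x - al - 1) / x * B s - B (Suc s) / x))) (at x)"
    unfolding GG_def D_def B_def
    by (intro DERIV_sum prod_rule Tc_deriv Bv_deriv x)
  moreover have "GG al e f f1 (Suc j) x = (\<Sum>s<Suc j. D s * B s + Tc al j s x * (if even s then B (Suc s) else (x - al - 1) / x * B s - B (Suc s) / x))"
  proof -
    have "GG al e f f1 (Suc j) x = (\<Sum>s<Suc (Suc j). (D s + P s) * B s)
        + (\<Sum>s<Suc (Suc j). (if s = 0 then 0 else if even s then - Tc al j (s-1) x / x else Tc al j (s-1) x) * B s)"
      unfolding GG_def Tc_Suc[OF less_imp_neq[OF x, symmetric]] B_def D_def P_def
      by (simp add: sum.distrib algebra_simps)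
    also have "(\<Sum>s<Suc (Suc j). (D s + P s) * B s) = (\<Sum>s<Suc j. (D s + P s) * B s)"
      by (simp add: D_def P_def Q_zero Tc_zero)
    also have "(\<Sum>s<Suc (Suc j). (if s = 0 then 0 else if even s then - Tc al j (s-1) x / x else Tc al j (s-1) x) * B s)
        = (\<Sum>s<Suc j. (if odd s then - Tc al j s x / x else Tc al j s x) * B (Suc s))"
    proof -
      define R where "R = (\<lambda>s. (if s = 0 then 0 else if even s then - Tc al j (s-1) x / x else Tc al j (s-1) x) * B s)"
      have "(\<Sum>s<Suc (Suc j). R s) = R 0 + (\<Sum>s<Suc j. R (Suc s))" by (rule sum.lessThan_Suc_shift)
      also have "\<dots> = (\<Sum>s<Suc j. (if odd s then - Tc al j s x / x else Tc al j s x) * B (Suc s))"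
        unfolding R_def by (auto intro!: sum.cong)
      finally show ?thesis unfolding R_def .
    qed
    also have "(\<Sum>s<Suc j. (D s + P s) * B s) + (\<Sum>s<Suc j. (if odd s then - Tc al j s x / x else Tc al j s x) * B (Suc s))
       = (\<Sum>s<Suc j. D s * B s + Tc al j s x * (if even s then B (Suc s) else (x - al - 1) / x * B s - B (Suc s) / x))"
      unfolding sum.distrib[symmetric] by (rule sum.cong) (auto simp: P_def algebra_simps)
    finally show ?thesis .
  qed
  ultimately show ?thesis by simp
qed

lemma iter_deriv: "x > 0 \<Longrightarrow> (deriv ^^ j) f x = GG al e f f1 j x"
proof (induction j arbitrary: x)
  case 0
  then show ?case by (simp add: GG_def Tc_def Bv_def)
next
  case (Suc j)
  have ev: "eventually (\<lambda>y. (deriv ^^ j) f y = GG al e f f1 j y) (nhds x)"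
  proof -
    have "eventually (\<lambda>y. y \<in> {0<..}) (nhds x)"
      using Suc.prems by (intro eventually_nhds_in_open) auto
    then show ?thesis by eventually_elim (use Suc.IH in auto)
  qed
  have "(deriv ^^ Suc j) f x = deriv ((deriv ^^ j) f) x" by simp
  also have "\<dots> = deriv (GG al e f f1 j) x" by (rule deriv_cong_ev[OF ev refl])
  also have "\<dots> = GG al e f f1 (Suc j) x" by (rule DERIV_imp_deriv[OF GG_deriv[OF Suc.prems]])
  finally show ?case .
qed

end

lemma prod_list_upt: "prod_list (map g [0..<N]) = (\<Prod>i<N. g i)"
  by (induction N) (auto simp: mult.commute)

lemma detm_det: "detm N A = Determinant.det (Matrix.mat N N (\<lambda>(i,j). A i j))"
  unfolding detm_def Determinant.det_def by (simp add: atLeast0LessThan)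

lemma detm_cong: "(\<And>i j. i < N \<Longrightarrow> j < N \<Longrightarrow> A i j = A' i j) \<Longrightarrow> detm N A = detm N A'"
  unfolding detm_def
  by (intro sum.cong refl arg_cong2[where f="(*)"] prod.cong) (auto dest: permutes_in_image)

lemma detm_lower:
  assumes "\<And>j s. j < s \<Longrightarrow> s < N \<Longrightarrow> T j s = 0"
  shows "detm N (\<lambda>j k. \<Sum>s<N. T j s * B s k) = (\<Prod>j<N. T j j) * detm N B"
proof -
  let ?T = "Matrix.mat N N (\<lambda>(i,j). T i j)" and ?B = "Matrix.mat N N (\<lambda>(i,j). B i j)"
  have m: "Matrix.mat N N (\<lambda>(j,k). \<Sum>s<N. T j s * B s k) = ?T * ?B"
    by (rule eq_matI) (auto simp: scalar_prod_def atLeast0LessThan intro!: sum.cong)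
  have "prod_list (diag_mat ?T) = (\<Prod>i<N. ?T $$ (i,i))"
    by (simp add: diag_mat_def prod_list_upt)
  also have "\<dots> = (\<Prod>j<N. T j j)" by (rule prod.cong) auto
  finally have pd: "prod_list (diag_mat ?T) = (\<Prod>j<N. T j j)" .
  have "Determinant.det ?T = (\<Prod>j<N. T j j)"
    by (subst det_lower_triangular[of N]) (auto simp: assms pd)
  then show ?thesis unfolding detm_det m
    by (subst det_mult[of _ N]) auto
qed

lemma detm_scale: "detm N (\<lambda>i j. r i * A i j * c j) = (\<Prod>i<N. r i) * (\<Prod>j<N. c j) * detm N A"
proof -
  have "(\<Prod>i<N. r i * A i (p i) * c (p i)) = (\<Prod>i<N. r i) * (\<Prod>j<N. c j) * (\<Prod>i<N. A i (p i))"
    if p: "p permutes {..<N}" for p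
  proof -
    have "(\<Prod>i<N. c (p i)) = (\<Prod>j<N. c j)"
      using prod.permute[OF p, of c] by (simp add: comp_def)
    then show ?thesis by (simp add: prod.distrib)
  qed
  then show ?thesis unfolding detm_def
    by (simp add: sum_distrib_left algebra_simps)
qed



lemma sg4: "(-1::real)^i * (-1/4)^i = (1/4)^i"
proof -
  have "(-1::real)^i * (-1/4)^i = ((-1) * (-1/4))^i" by (rule power_mult_distrib[symmetric])
  then show ?thesis by simp
qed

lemma q4: "(1/2::real)^(2*i) = (1/4)^i"
proof -
  have "(1/2::real)^(2*i) = ((1/2)^2)^i" by (rule power_mult)
  then show ?thesis by (simp add: power2_eq_square)
qed

lemma alg_e: "(X::real) \<noteq> 0 \<Longrightarrow> (s * X / (X*X)) * t = (s*t) / X"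
  by (simp add: field_simps)

lemma alg_o: "(x::real) \<noteq> 0 \<Longrightarrow> X \<noteq> 0 \<Longrightarrow> (s * (X*x) / (X*X*x)) * (t * (1/(2*x))) = (s*t) * (1/2) / (X * x)"
  by (simp add: field_simps)

lemma lead_eq:
  assumes x: "(x::real) > 0"
  shows "Tc al j j x * ((-1/4)^(j div 2) * (if even j then 1 else 1/(2*x))) = (1/2)^j / x^((j+1) div 2)"
proof -
  obtain i where "j = 2*i \<or> j = 2*i+1" by (metis oddE evenE)
  then show ?thesis
  proof
    assume j: "j = 2*i"
    have jd: "(j+1) div 2 = i" "j div 2 = i" "even j" using j by auto
    have xx: "x^j = x^i * x^i" unfolding j by (simp add: mult_2 power_add)
    have xi: "x^i \<noteq> 0" using x by simp
    show ?thesis unfolding Tc_def Q_diag jd xx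
      using alg_e[OF xi, of "(-1)^i" "(-1/4)^i"] jd(3) unfolding sg4 j q4 by simp
  next
    assume j: "j = 2*i+1"
    have jd: "(j+1) div 2 = i+1" "j div 2 = i" "\<not> even j" using j by auto
    have xx: "x^j = x^i * x^i * x" "x^(i+1) = x^i * x" unfolding j by (simp_all add: mult_2 power_add)
    have xi: "x^i \<noteq> 0" "x \<noteq> 0" using x by auto
    have q: "(1/2::real)^j = (1/4)^i * (1/2)" unfolding j by (simp only: power_add q4 power_one_right)
    show ?thesis unfolding Tc_def Q_diag jd xx q
      using alg_o[OF xi(2) xi(1), of "(-1)^i" "(-1/4)^i"] jd(3) unfolding sg4 by simp
  qed
qed

lemma wron_formula:
  fixes f fd :: "nat \<Rightarrow> real \<Rightarrow> real" and e c xv ze :: "nat \<Rightarrow> real"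
  assumes x: "x > 0"
    and cols: "\<And>k. k < N \<Longrightarrow> col al (e k) (f k) (fd k)"
    and fx: "\<And>k. k < N \<Longrightarrow> f k x = c k * xv k"
    and fdx: "\<And>k. k < N \<Longrightarrow> fd k x = c k * ze k / (2*x)"
  shows "detm N (\<lambda>j k. (deriv^^j) (f k) x) = (\<Prod>j<N. (1/2)^j / x^((j+1) div 2)) * (\<Prod>k<N. c k)
     * detm N (\<lambda>j k. (-4 * e k)^(j div 2) * (if even j then xv k else ze k))"
proof -
  define rr where "rr = (\<lambda>s. (-1/4::real)^(s div 2) * (if even s then 1 else 1/(2*x)))"
  define A where "A = (\<lambda>j k. (-4 * e k)^(j div 2) * (if even j then xv k else ze k))"
  have "detm N (\<lambda>j k. (deriv^^j) (f k) x) = detm N (\<lambda>j k. \<Sum>s<N. Tc al j s x * Bv (e k) (f k) (fd k) s x)"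
  proof (rule detm_cong)
    fix j k assume j: "j < N" and k: "k < N"
    have "(deriv^^j) (f k) x = GG al (e k) (f k) (fd k) j x" by (rule col.iter_deriv[OF cols[OF k] x])
    also have "\<dots> = (\<Sum>s<N. Tc al j s x * Bv (e k) (f k) (fd k) s x)"
      unfolding GG_def using j by (intro sum.mono_neutral_left) (auto simp: Tc_zero)
    finally show "(deriv^^j) (f k) x = (\<Sum>s<N. Tc al j s x * Bv (e k) (f k) (fd k) s x)" .
  qed
  also have "\<dots> = (\<Prod>j<N. Tc al j j x) * detm N (\<lambda>s k. Bv (e k) (f k) (fd k) s x)"
    by (rule detm_lower) (simp add: Tc_zero)
  also have "detm N (\<lambda>s k. Bv (e k) (f k) (fd k) s x) = detm N (\<lambda>s k. rr s * A s k * c k)"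
  proof (rule detm_cong)
    fix s k assume s: "s < N" and k: "k < N"
    have p: "(-1/4)^(s div 2) * (-4 * e k)^(s div 2) = e k ^ (s div 2)"
    proof -
      have "(-1/4::real)^(s div 2) * (-4 * e k)^(s div 2) = ((-1/4) * (-4 * e k))^(s div 2)"
        by (rule power_mult_distrib[symmetric])
      then show ?thesis by simp
    qed
    have "rr s * A s k * c k = ((-1/4)^(s div 2) * (-4 * e k)^(s div 2)) * ((if even s then 1 else 1/(2*x)) * (if even s then xv k else ze k) * c k)"
      unfolding rr_def A_def by (simp only: mult_ac)
    also have "\<dots> = e k ^ (s div 2) * ((if even s then 1 else 1/(2*x)) * (if even s then xv k else ze k) * c k)"
      by (simp only: p)
    also have "\<dots> = Bv (e k) (f k) (fd k) s x"
      unfolding Bv_def using fx[OF k] fdx[OF k] by (cases "even s") simp_all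
    finally show "Bv (e k) (f k) (fd k) s x = rr s * A s k * c k" by simp
  qed
  also have "\<dots> = (\<Prod>i<N. rr i) * (\<Prod>j<N. c j) * detm N A"
    by (rule detm_scale)
  also have "(\<Prod>j<N. Tc al j j x) * ((\<Prod>i<N. rr i) * (\<Prod>j<N. c j) * detm N A)
     = (\<Prod>j<N. Tc al j j x * rr j) * (\<Prod>j<N. c j) * detm N A"
    by (simp only: prod.distrib mult_ac)
  also have "(\<Prod>j<N. Tc al j j x * rr j) = (\<Prod>j<N. (1/2)^j / x^((j+1) div 2))"
    unfolding rr_def by (rule prod.cong[OF refl]) (rule lead_eq[OF x])
  finally show ?thesis unfolding A_def .
qed



lemma lag_fun: "(\<lambda>y. lag a m y) = (\<lambda>y. poly (LP a m) y)"
  by (simp add: lag_LP fun_eq_iff)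

lemma lagD: "b = a + 1 \<Longrightarrow> ((\<lambda>y. lag a m y) has_real_derivative - lag b (m-1) y) (at y)"
  unfolding lag_fun using poly_DERIV[of "LP a m" y] by (simp add: LP_deriv lag_LP)

lemma lag2: "b = a + 1 \<Longrightarrow> lag b m y = lag a m y + lag b (m-1) y"
  using arg_cong[OF LP_L2[of a m], of "\<lambda>p. poly p y"] by (simp add: lag_LP)

lemma lag3: "b = a + 1 \<Longrightarrow> c = a - 1 \<Longrightarrow> a * lag a m y - y * lag b (m-1) y = (a + of_int m) * lag c m y"
  using arg_cong[OF LP_L3[of a m], of "\<lambda>p. poly p y"] by (simp add: lag_LP)

lemma lag4: "b = a + 1 \<Longrightarrow> of_int m * lag a m y = (a + of_int m) * lag a (m-1) y - y * lag b (m-1) y"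
  using arg_cong[OF LP_L4[of m a], of "\<lambda>p. poly p y"] by (simp add: lag_LP)

lemma lagD_neg: "b = a + 1 \<Longrightarrow> ((\<lambda>y. lag a m (-y)) has_real_derivative lag b (m-1) (-y)) (at y)"
  using DERIV_chain2[OF lagD[of b a m "-y"] DERIV_minus[OF DERIV_ident]] by simp

definition cc :: "real \<Rightarrow> seed \<Rightarrow> real \<Rightarrow> real" where
  "cc g s x = (case s of (v, TI) \<Rightarrow> exp x | (v, TII) \<Rightarrow> x powr (1/2 - g))"

definition ff1 :: "real \<Rightarrow> seed \<Rightarrow> real \<Rightarrow> real" where
  "ff1 g s = (case s of (v, TI) \<Rightarrow> (\<lambda>y. exp y * lag (g + 1/2) (int v) (- y))
     | (v, TII) \<Rightarrow> (\<lambda>y. (real v + 1/2 - g) * (y powr (- g - 1/2) * lag (- g - 1/2) (int v) y)))"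

lemma algI: "(x::real) \<noteq> 0 \<Longrightarrow> (g + 1/2) * L1 + x * L2 = (g + 1/2 + v) * L0 \<Longrightarrow>
   E * L1 + E * L2 = ((x - (g - 1/2) - 1) * (E * L1) - (-4 * (g + v + 1/2)) / 4 * (E * L0)) / x"
proof -
  assume x: "x \<noteq> 0" and h: "(g + 1/2) * L1 + x * L2 = (g + 1/2 + v) * L0"
  have "((x - (g - 1/2) - 1) * (E * L1) - (-4 * (g + v + 1/2)) / 4 * (E * L0)) = E * ((x - (g - 1/2) - 1) * L1 + (g + 1/2 + v) * L0)"
    by (simp add: field_simps)
  also have "\<dots> = E * (x * L1 + x * L2)" unfolding h[symmetric] by (simp add: algebra_simps)
  finally show ?thesis using x by (simp add: field_simps)
qed

lemma col_TI: "col (g - 1/2) (Etil g (v, TI) / 4) (mu g (v, TI)) (ff1 g (v, TI))"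
proof
  fix x :: real assume x: "x > 0"
  have fn: "mu g (v, TI) = (\<lambda>y. exp y * lag (g - 1/2) (int v) (- y))" by (simp add: mu_def fun_eq_iff)
  have "((\<lambda>y. exp y * lag (g - 1/2) (int v) (- y)) has_real_derivative
     exp x * lag (g - 1/2) (int v) (- x) + exp x * lag (g + 1/2) (int v - 1) (- x)) (at x)"
    using DERIV_mult[OF DERIV_exp lagD_neg[of "g + 1/2" "g - 1/2" "int v" x]] by (simp add: algebra_simps)
  moreover have "exp x * lag (g - 1/2) (int v) (- x) + exp x * lag (g + 1/2) (int v - 1) (- x) = ff1 g (v, TI) x"
    using lag2[of "g + 1/2" "g - 1/2" "int v" "-x"] by (simp add: ff1_def algebra_simps)
  ultimately show "(mu g (v, TI) has_real_derivative ff1 g (v, TI) x) (at x)" unfolding fn by simp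
next
  fix x :: real assume x: "x > 0"
  have fn: "ff1 g (v, TI) = (\<lambda>y. exp y * lag (g + 1/2) (int v) (- y))" by (simp add: ff1_def)
  have "((\<lambda>y. exp y * lag (g + 1/2) (int v) (- y)) has_real_derivative
     exp x * lag (g + 1/2) (int v) (- x) + exp x * lag (g + 3/2) (int v - 1) (- x)) (at x)"
    using DERIV_mult[OF DERIV_exp lagD_neg[of "g + 3/2" "g + 1/2" "int v" x]] by (simp add: algebra_simps)
  moreover have "exp x * lag (g + 1/2) (int v) (- x) + exp x * lag (g + 3/2) (int v - 1) (- x)
     = ((x - (g - 1/2) - 1) * ff1 g (v, TI) x - Etil g (v, TI) / 4 * mu g (v, TI) x) / x"
  proof -
    have l3: "(g + 1/2) * lag (g + 1/2) (int v) (- x) + x * lag (g + 3/2) (int v - 1) (- x)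
        = (g + 1/2 + real v) * lag (g - 1/2) (int v) (- x)"
      using lag3[of "g + 3/2" "g + 1/2" "g - 1/2" "int v" "-x"] by simp
    show ?thesis using algI[OF _ l3, of "exp x"] x by (simp add: ff1_def mu_def Etil_def)
  qed
  ultimately show "(ff1 g (v, TI) has_real_derivative ((x - (g - 1/2) - 1) * ff1 g (v, TI) x - Etil g (v, TI) / 4 * mu g (v, TI) x) / x) (at x)"
    unfolding fn by simp
qed

lemma algII1: "b * L0 - x * L2 = K * (Lc::real) \<Longrightarrow>
   b * Pm * L0 + (x * Pm) * (- L2) = K * (Pm * Lc)"
proof -
  assume h: "b * L0 - x * L2 = K * (Lc::real)"
  have "b * Pm * L0 + (x * Pm) * (- L2) = Pm * (b * L0 - x * L2)" by (simp add: algebra_simps)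
  then show ?thesis unfolding h by simp
qed

lemma algS: "(x::real) \<noteq> 0 \<Longrightarrow> (x * Pm) * (-2 * c * Lc) / (2 * x) = - c * (Pm * Lc)"
  by (simp add: field_simps)

lemma algII2: "(x::real) \<noteq> 0 \<Longrightarrow> Lb = Lc + Lb1 \<Longrightarrow>
   K * ((- g - 1/2) * (Pm / x) * Lc + Pm * (- Lb1)) = ((x - (g - 1/2) - 1) * (K * (Pm * Lc)) - K * ((x * Pm) * Lb)) / x"
proof -
  assume x: "x \<noteq> 0" and h: "Lb = Lc + Lb1"
  show ?thesis unfolding h using x by (simp add: field_simps)
qed

lemma powr_split: "(x::real) > 0 \<Longrightarrow> x powr (1/2 - g) = x * x powr (- g - 1/2)"
proof -
  assume x: "x > 0"
  have "x powr (1/2 - g) = x powr (1 + (- g - 1/2))" by (rule arg_cong[where f="\<lambda>a. x powr a"]) simp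
  also have "\<dots> = x powr 1 * x powr (- g - 1/2)" by (rule powr_add)
  also have "x powr 1 = x" using x by (simp add: powr_one)
  finally show ?thesis .
qed

lemma powr_split2: "(x::real) > 0 \<Longrightarrow> x powr (- g - 1/2 - 1) = x powr (- g - 1/2) / x"
proof -
  assume x: "x > 0"
  have "x powr (- g - 1/2 - 1) = x powr (- g - 1/2) / x powr 1" by (rule powr_diff)
  also have "x powr 1 = x" using x by (simp add: powr_one)
  finally show ?thesis .
qed

lemma col_TII: "col (g - 1/2) (Etil g (v, TII) / 4) (mu g (v, TII)) (ff1 g (v, TII))"
proof
  fix x :: real assume x: "x > 0"
  have fn: "mu g (v, TII) = (\<lambda>y. y powr (1/2 - g) * lag (1/2 - g) (int v) y)" by (simp add: mu_def fun_eq_iff)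
  have e1: "1/2 - g - 1 = - g - 1/2" by simp
  have "((\<lambda>y. y powr (1/2 - g) * lag (1/2 - g) (int v) y) has_real_derivative
     (1/2 - g) * x powr (- g - 1/2) * lag (1/2 - g) (int v) x + x powr (1/2 - g) * (- lag (3/2 - g) (int v - 1) x)) (at x)"
    using DERIV_mult[OF has_real_derivative_powr[OF x, of "1/2 - g"] lagD[of "3/2 - g" "1/2 - g" "int v" x]]
    unfolding e1 by (simp add: algebra_simps)
  moreover have "(1/2 - g) * x powr (- g - 1/2) * lag (1/2 - g) (int v) x + x powr (1/2 - g) * (- lag (3/2 - g) (int v - 1) x)
      = ff1 g (v, TII) x"
  proof -
    have l3: "(1/2 - g) * lag (1/2 - g) (int v) x - x * lag (3/2 - g) (int v - 1) x
        = (real v + 1/2 - g) * lag (- g - 1/2) (int v) x"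
      using lag3[of "3/2 - g" "1/2 - g" "- g - 1/2" "int v" x] by (simp add: algebra_simps)
    show ?thesis unfolding powr_split[OF x] ff1_def using algII1[OF l3, of "x powr (- g - 1/2)"] by simp
  qed
  ultimately show "(mu g (v, TII) has_real_derivative ff1 g (v, TII) x) (at x)" unfolding fn by simp
next
  fix x :: real assume x: "x > 0"
  have fn: "ff1 g (v, TII) = (\<lambda>y. (real v + 1/2 - g) * (y powr (- g - 1/2) * lag (- g - 1/2) (int v) y))"
    by (simp add: ff1_def)
  have "((\<lambda>y. (real v + 1/2 - g) * (y powr (- g - 1/2) * lag (- g - 1/2) (int v) y)) has_real_derivative
     (real v + 1/2 - g) * ((- g - 1/2) * x powr (- g - 1/2 - 1) * lag (- g - 1/2) (int v) x
        + x powr (- g - 1/2) * (- lag (1/2 - g) (int v - 1) x))) (at x)"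
    using DERIV_cmult[OF DERIV_mult[OF has_real_derivative_powr[OF x, of "- g - 1/2"] lagD[of "1/2 - g" "- g - 1/2" "int v" x]],
      of "real v + 1/2 - g"]
    by (simp add: algebra_simps)
  moreover have "(real v + 1/2 - g) * ((- g - 1/2) * x powr (- g - 1/2 - 1) * lag (- g - 1/2) (int v) x
        + x powr (- g - 1/2) * (- lag (1/2 - g) (int v - 1) x))
     = ((x - (g - 1/2) - 1) * ff1 g (v, TII) x - Etil g (v, TII) / 4 * mu g (v, TII) x) / x"
  proof -
    have l2: "lag (1/2 - g) (int v) x = lag (- g - 1/2) (int v) x + lag (1/2 - g) (int v - 1) x"
      using lag2[of "1/2 - g" "- g - 1/2" "int v" x] by simp
    have et: "Etil g (v, TII) / 4 = real v + 1/2 - g" by (simp add: Etil_def)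
    have mu_x: "mu g (v, TII) x = (x * x powr (- g - 1/2)) * lag (1/2 - g) (int v) x"
      by (simp add: mu_def powr_split[OF x])
    have ff_x: "ff1 g (v, TII) x = (real v + 1/2 - g) * (x powr (- g - 1/2) * lag (- g - 1/2) (int v) x)"
      by (simp add: ff1_def)
    show ?thesis unfolding powr_split2[OF x] et mu_x ff_x
      by (rule algII2[OF _ l2]) (use x in simp)
  qed
  ultimately show "(ff1 g (v, TII) has_real_derivative ((x - (g - 1/2) - 1) * ff1 g (v, TII) x - Etil g (v, TII) / 4 * mu g (v, TII) x) / x) (at x)"
    unfolding fn by simp
qed

lemma col_seed: "col (g - 1/2) (Etil g s / 4) (mu g s) (ff1 g s)"
proof -
  obtain v t where s: "s = (v, t)" by (cases s)
  show ?thesis unfolding s by (cases t) (simp_all add: col_TI col_TII)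
qed

lemma seed_fx: "x > 0 \<Longrightarrow> mu g s x = cc g s x * xi g s x"
  by (cases s, rename_tac v t, case_tac t) (simp_all add: mu_def cc_def xi_def)

lemma seed_f1x: "x > 0 \<Longrightarrow> ff1 g s x = cc g s x * zetatil g s x / (2*x)"
proof -
  assume x: "x > 0"
  obtain v t where s: "s = (v, t)" by (cases s)
  show ?thesis
  proof (cases t)
    case TI then show ?thesis using x by (simp add: s ff1_def cc_def zetatil_def)
  next
    case TII
    have xz: "x \<noteq> 0" using x by simp
    have "ff1 g (v, TII) x = (x * x powr (- g - 1/2)) * (-2 * (g - 1/2 - real v) * lag (- g - 1/2) (int v) x) / (2 * x)"
      unfolding algS[OF xz] by (simp add: ff1_def)
    then show ?thesis using x by (simp add: s TII cc_def zetatil_def powr_split[OF x])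
  qed
qed

lemma algP: "(x::real) \<noteq> 0 \<Longrightarrow> (g + 1/2) * L1 - x * L2 = (g + 1/2 + (n - 1)) * L0' \<Longrightarrow>
   n * L0 = (g - 1/2 + n) * L0' - x * L1 \<Longrightarrow> L2 = ((x - (g - 1/2) - 1) * (- L1) - n * L0) / x"
proof -
  assume x: "x \<noteq> 0" and h3: "(g + 1/2) * L1 - x * L2 = (g + 1/2 + (n - 1)) * L0'"
    and h4: "n * L0 = (g - 1/2 + n) * L0' - x * L1"
  have "x * L2 = (x - (g - 1/2) - 1) * (- L1) - n * L0" using h3 h4 by (simp add: algebra_simps)
  then show ?thesis using x by (simp add: field_simps)
qed

lemma col_Pn: "col (g - 1/2) (real n) (Pn g n) (\<lambda>y. - lag (g + 1/2) (int n - 1) y)"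
proof
  fix x :: real assume x: "x > 0"
  have fn: "Pn g n = (\<lambda>y. lag (g - 1/2) (int n) y)" by (simp add: Pn_def fun_eq_iff)
  show "(Pn g n has_real_derivative - lag (g + 1/2) (int n - 1) x) (at x)"
    unfolding fn by (rule lagD) simp
next
  fix x :: real assume x: "x > 0"
  have "((\<lambda>y. - lag (g + 1/2) (int n - 1) y) has_real_derivative - (- lag (g + 3/2) (int n - 1 - 1) x)) (at x)"
    by (intro DERIV_minus lagD) simp
  moreover have "- (- lag (g + 3/2) (int n - 1 - 1) x) = ((x - (g - 1/2) - 1) * (- lag (g + 1/2) (int n - 1) x) - real n * Pn g n x) / x"
  proof -
    have l3: "(g + 1/2) * lag (g + 1/2) (int n - 1) x - x * lag (g + 3/2) (int n - 1 - 1) x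
       = (g + 1/2 + (real n - 1)) * lag (g - 1/2) (int n - 1) x"
      using lag3[of "g + 3/2" "g + 1/2" "g - 1/2" "int n - 1" x] by simp
    have l4: "real n * lag (g - 1/2) (int n) x = (g - 1/2 + real n) * lag (g - 1/2) (int n - 1) x - x * lag (g + 1/2) (int n - 1) x"
      using lag4[of "g + 1/2" "g - 1/2" "int n" x] by simp
    show ?thesis using algP[OF _ l3 l4] x by (simp add: Pn_def)
  qed
  ultimately show "((\<lambda>y. - lag (g + 1/2) (int n - 1) y) has_real_derivative
      ((x - (g - 1/2) - 1) * (- lag (g + 1/2) (int n - 1) x) - real n * Pn g n x) / x) (at x)" by simp
qed



lemma div4_aux: "0 \<le> (p::int) \<Longrightarrow> p < 4 \<Longrightarrow> (4 * X + p) div 4 = X"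
  by presburger

lemma int_id_Xi:
  fixes a b :: nat
  shows "int ((a+b)*(a+b) div 4) - int a * int b
    = ((int a - int b) div 2) * ((int a - int b) div 2 + int (a+b) - 2 * (int (a+b) div 2))"
proof -
  define d where "d = (int a - int b) div 2"
  define p where "p = (int a - int b) mod 2"
  have p01: "0 \<le> p" "p < 2" unfolding p_def by auto
  have "p = 0 \<or> p = 1" using p01 by arith
  then have pp: "p * p = p" by auto
  have ae: "int a = int b + 2 * d + p" unfolding d_def p_def by simp
  define u where "u = d + int b"
  have s: "int (a + b) = 2 * u + p" using ae unfolding u_def by simp
  have s2: "int ((a+b)*(a+b)) = 4 * (u * u + u * p) + p"
  proof -
    have "int ((a+b)*(a+b)) = int (a+b) * int (a+b)" by simp
    also have "\<dots> = 4 * (u * u + u * p) + p * p" unfolding s by (simp add: algebra_simps)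
    finally show ?thesis using pp by simp
  qed
  have q: "int ((a+b)*(a+b) div 4) = u * u + u * p"
    unfolding zdiv_int s2 using p01 by (simp add: div4_aux)
  have r: "int (a+b) div 2 = u" unfolding s using p01 by presburger
  show ?thesis unfolding q r unfolding s d_def[symmetric] using ae unfolding u_def by (simp add: algebra_simps)
qed

lemma int_id_PD:
  fixes a b :: nat
  shows "int ((a+b+1)*(a+b+1) div 4) - (int a + 1) * int b
    = ((int a - int b) div 2 + 1) * ((int a - int b) div 2 + int (a+b) - 2 * (int (a+b) div 2))"
proof -
  define d where "d = (int a - int b) div 2"
  define p where "p = (int a - int b) mod 2"
  have p01: "0 \<le> p" "p < 2" unfolding p_def by auto
  have "p = 0 \<or> p = 1" using p01 by arith
  then have pp: "p * p = p" by auto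
  have ae: "int a = int b + 2 * d + p" unfolding d_def p_def by simp
  define u where "u = d + int b"
  have s: "int (a + b) = 2 * u + p" using ae unfolding u_def by simp
  have s2: "int ((a+b+1)*(a+b+1)) = 4 * (u * u + u + p * u + p) + (1 - p)"
  proof -
    have "int ((a+b+1)*(a+b+1)) = (int (a+b) + 1) * (int (a+b) + 1)" by (simp add: algebra_simps)
    also have "\<dots> = 4 * (u * u + u + p * u) + p * p + 2 * p + 1" unfolding s by (simp add: algebra_simps)
    finally show ?thesis using pp by simp
  qed
  have q: "int ((a+b+1)*(a+b+1) div 4) = u * u + u + p * u + p"
    unfolding zdiv_int s2 using p01 by (simp add: div4_aux)
  have r: "int (a+b) div 2 = u" unfolding s using p01 by presburger
  show ?thesis unfolding q r unfolding s d_def[symmetric] using ae unfolding u_def by (simp add: algebra_simps)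
qed

lemma sq_div4: "(Suc N * Suc N) div 4 = N * N div 4 + (N + 1) div 2"
proof -
  obtain t where "N = 2*t \<or> N = 2*t+1" by (metis oddE evenE)
  then show ?thesis
  proof
    assume N: "N = 2*t"
    have "Suc N * Suc N = 4 * (t*t + t) + 1" "N * N = 4 * (t*t)" unfolding N by (simp_all add: algebra_simps)
    then show ?thesis unfolding N by simp
  next
    assume N: "N = 2*t+1"
    have "Suc N * Suc N = 4 * ((t+1)*(t+1))" "N * N = 4 * (t*t + t) + 1" unfolding N by (simp_all add: algebra_simps)
    then show ?thesis unfolding N by (simp add: algebra_simps)
  qed
qed

lemma Lprod:
  assumes x: "(x::real) > 0"
  shows "(\<Prod>j<N. (1/2::real)^j / x^((j+1) div 2)) = 2 powr (- (real N * (real N - 1) / 2)) * x powr (- real (N * N div 4))"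
proof (induction N)
  case 0 then show ?case using x by simp
next
  case (Suc N)
  have h1: "(1/2::real)^N = 2 powr (- real N)"
    by (simp add: powr_minus powr_realpow power_one_over inverse_eq_divide)
  have h2: "1 / x^((N+1) div 2) = x powr (- real ((N+1) div 2))"
  proof -
    have "x powr (- real ((N+1) div 2)) = inverse (x powr real ((N+1) div 2))" by (rule powr_minus)
    also have "x powr real ((N+1) div 2) = x^((N+1) div 2)" by (rule powr_realpow[OF x])
    finally show ?thesis by (simp add: divide_inverse)
  qed
  have "(\<Prod>j<Suc N. (1/2::real)^j / x^((j+1) div 2)) = (\<Prod>j<N. (1/2::real)^j / x^((j+1) div 2)) * ((1/2)^N * (1 / x^((N+1) div 2)))"
    by simp
  also have "\<dots> = (2 powr (- (real N * (real N - 1) / 2)) * 2 powr (- real N)) * (x powr (- real (N * N div 4)) * x powr (- real ((N+1) div 2)))"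
    unfolding Suc.IH h1 h2 by (simp add: algebra_simps)
  also have "\<dots> = 2 powr (- (real N * (real N - 1) / 2) + - real N) * x powr (- real (N * N div 4) + - real ((N+1) div 2))"
    by (simp only: powr_add)
  also have "- (real N * (real N - 1) / 2) + - real N = - (real (Suc N) * (real (Suc N) - 1) / 2)"
    by (simp add: algebra_simps)
  also have "- real (N * N div 4) + - real ((N+1) div 2) = - real (Suc N * Suc N div 4)"
    unfolding sq_div4 by simp
  finally show ?case .
qed

lemma MI_MII: "MI D + MII D = length D"
  by (induction D) (auto simp: MI_def MII_def split: stype.splits, metis (full_types) stype.exhaust)

lemma prod_cc: "(\<Prod>k<length D. cc g (D!k) x) = exp x ^ MI D * (x powr (1/2 - g)) ^ MII D"
proof (induction D)
  case Nil then show ?case by (simp add: MI_def MII_def)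
next
  case (Cons s D)
  obtain v t where s: "s = (v, t)" by (cases s)
  have "(\<Prod>k<length (s # D). cc g ((s # D)!k) x) = cc g s x * (\<Prod>k<length D. cc g (D!k) x)"
    unfolding length_Cons prod.lessThan_Suc_shift by simp
  then show ?case unfolding Cons.IH s by (cases t) (simp_all add: cc_def MI_def MII_def)
qed



lemma exp_cancel: "exp (x::real) ^ a * exp (- real a * x) = 1"
proof -
  have "exp x ^ a = exp (real a * x)" by (rule exp_of_nat_mult[symmetric])
  then show ?thesis by (simp add: exp_minus)
qed

lemma powr3: "(x::real) > 0 \<Longrightarrow> x powr A * (x powr B) ^ b * x powr C = x powr (A + real b * B + C)"
  by (simp add: powr_power powr_add)

theorem mainTheorem3:
  fixes g :: real and D :: "seed list" and n :: nat and \<eta> :: real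
  assumes hg: "g > 1/2"
    and hvalid: "\<forall>s\<in>set D. valid_seed g s"
    and hdist: "distinct D"
    and heta: "\<eta> > 0"
  defines "M \<equiv> length D"
    and "M' \<equiv> (real (MI D) - real (MII D)) / 2"
  shows "PD g D n \<eta> = 2 powr (- (real M * (real M + 1) / 2)) * detm (M + 1) (amat g D n \<eta>)
           * \<eta> powr (- real_of_int ((\<lfloor>M'\<rfloor> + 1) * (\<lfloor>M'\<rfloor> + int M - 2 * \<lfloor>real M / 2\<rfloor>)))
         \<and> Xi g D \<eta> = 2 powr (- (real M * (real M - 1) / 2)) * detm M (bmat g D \<eta>)
           * \<eta> powr (- real_of_int (\<lfloor>M'\<rfloor> * (\<lfloor>M'\<rfloor> + int M - 2 * \<lfloor>real M / 2\<rfloor>)))"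
proof -
  define a where "a = MI D"
  define b where "b = MII D"
  have Mab: "M = a + b" unfolding M_def a_def b_def by (simp add: MI_MII)
  have fl1: "\<lfloor>M'\<rfloor> = (int a - int b) div 2"
  proof -
    have "M' = real_of_int (int a - int b) / real_of_int 2" unfolding M'_def a_def b_def by simp
    then show ?thesis by (simp only: floor_divide_of_int_eq)
  qed
  have fl2: "\<lfloor>real M / 2\<rfloor> = int M div 2"
  proof -
    have "real M / 2 = real M / real (2::nat)" by simp
    then have "\<lfloor>real M / 2\<rfloor> = int (M div 2)" by (simp only: floor_divide_of_nat_eq)
    then show ?thesis by (simp add: zdiv_int)
  qed
  have ne: "\<eta> \<noteq> 0" using heta by simp
  have pcc: "(\<Prod>k<M. cc g (D!k) \<eta>) = exp \<eta> ^ a * (\<eta> powr (1/2 - g)) ^ b"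
    unfolding M_def a_def b_def by (rule prod_cc)
  have W1: "wronskian (map (mu g) D) \<eta> = (\<Prod>j<M. (1/2)^j / \<eta>^((j+1) div 2)) * (\<Prod>k<M. cc g (D!k) \<eta>) * detm M (bmat g D \<eta>)"
  proof -
    have "wronskian (map (mu g) D) \<eta> = detm M (\<lambda>j k. (deriv^^j) (mu g (D!k)) \<eta>)"
      unfolding wronskian_def M_def length_map by (rule detm_cong) simp
    also have "\<dots> = (\<Prod>j<M. (1/2)^j / \<eta>^((j+1) div 2)) * (\<Prod>k<M. cc g (D!k) \<eta>)
        * detm M (\<lambda>j k. (-4 * (Etil g (D!k) / 4))^(j div 2) * (if even j then xi g (D!k) \<eta> else zetatil g (D!k) \<eta>))"
      by (rule wron_formula[OF heta, where al="g - 1/2" and fd="\<lambda>k. ff1 g (D!k)"])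
         (simp_all add: col_seed seed_fx[OF heta] seed_f1x[OF heta])
    also have "detm M (\<lambda>j k. (-4 * (Etil g (D!k) / 4))^(j div 2) * (if even j then xi g (D!k) \<eta> else zetatil g (D!k) \<eta>))
        = detm M (bmat g D \<eta>)"
      by (rule detm_cong) (simp add: bmat_def)
    finally show ?thesis .
  qed
  have Xi_eq: "Xi g D \<eta> = 2 powr (- (real M * (real M - 1) / 2)) * detm M (bmat g D \<eta>)
           * \<eta> powr (- real_of_int (\<lfloor>M'\<rfloor> * (\<lfloor>M'\<rfloor> + int M - 2 * \<lfloor>real M / 2\<rfloor>)))"
  proof -
    have "Xi g D \<eta> = 2 powr (- (real M * (real M - 1) / 2)) * detm M (bmat g D \<eta>)
        * (\<eta> powr (- real (M * M div 4)) * (\<eta> powr (1/2 - g)) ^ b * \<eta> powr ((real a + g - 1/2) * real b))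
        * (exp \<eta> ^ a * exp (- real a * \<eta>))"
      unfolding Xi_def W1 Lprod[OF heta] pcc a_def[symmetric] b_def[symmetric] by (simp add: ac_simps)
    also have "exp \<eta> ^ a * exp (- real a * \<eta>) = 1" by (rule exp_cancel)
    also have "\<eta> powr (- real (M * M div 4)) * (\<eta> powr (1/2 - g)) ^ b * \<eta> powr ((real a + g - 1/2) * real b)
        = \<eta> powr (- real (M * M div 4) + real b * (1/2 - g) + (real a + g - 1/2) * real b)"
      by (rule powr3[OF heta])
    also have "- real (M * M div 4) + real b * (1/2 - g) + (real a + g - 1/2) * real b
        = - real_of_int (\<lfloor>M'\<rfloor> * (\<lfloor>M'\<rfloor> + int M - 2 * \<lfloor>real M / 2\<rfloor>))"
    proof -
      have "real_of_int (\<lfloor>M'\<rfloor> * (\<lfloor>M'\<rfloor> + int M - 2 * \<lfloor>real M / 2\<rfloor>)) = real_of_int (int ((a+b)*(a+b) div 4) - int a * int b)"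
        unfolding fl1 fl2 unfolding Mab int_id_Xi ..
      also have "\<dots> = real (M * M div 4) - real a * real b" unfolding Mab by simp
      finally show ?thesis by (simp add: algebra_simps)
    qed
    finally show ?thesis by simp
  qed
  define ff where "ff = (\<lambda>k. if k < M then mu g (D!k) else Pn g n)"
  have W2: "wronskian (map (mu g) D @ [Pn g n]) \<eta> = (\<Prod>j<M+1. (1/2)^j / \<eta>^((j+1) div 2)) * (\<Prod>k<M. cc g (D!k) \<eta>) * detm (M+1) (amat g D n \<eta>)"
  proof -
    have "wronskian (map (mu g) D @ [Pn g n]) \<eta> = detm (M+1) (\<lambda>j k. (deriv^^j) (ff k) \<eta>)"
    proof -
      have len: "length (map (mu g) D @ [Pn g n]) = length D + 1" by simp
      show ?thesis unfolding wronskian_def M_def ff_def len by (rule detm_cong) (auto simp: nth_append)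
    qed
    also have "\<dots> = (\<Prod>j<M+1. (1/2)^j / \<eta>^((j+1) div 2)) * (\<Prod>k<M+1. if k < M then cc g (D!k) \<eta> else 1)
        * detm (M+1) (\<lambda>j k. (-4 * (if k < M then Etil g (D!k) / 4 else real n))^(j div 2)
            * (if even j then (if k < M then xi g (D!k) \<eta> else lag (g - 1/2) (int n) \<eta>)
               else (if k < M then zetatil g (D!k) \<eta> else zetan g n \<eta>)))"
    proof (rule wron_formula[OF heta, where al="g - 1/2" and fd="\<lambda>k. if k < M then ff1 g (D!k) else (\<lambda>y. - lag (g + 1/2) (int n - 1) y)"])
      fix k assume "k < M + 1"
      show "col (g - 1/2) (if k < M then Etil g (D!k) / 4 else real n) (ff k)
          (if k < M then ff1 g (D!k) else (\<lambda>y. - lag (g + 1/2) (int n - 1) y))"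
        unfolding ff_def by (cases "k < M") (simp_all add: col_seed col_Pn)
      show "ff k \<eta> = (if k < M then cc g (D!k) \<eta> else 1) * (if k < M then xi g (D!k) \<eta> else lag (g - 1/2) (int n) \<eta>)"
        unfolding ff_def by (cases "k < M") (simp_all add: seed_fx[OF heta] Pn_def)
      show "(if k < M then ff1 g (D!k) else (\<lambda>y. - lag (g + 1/2) (int n - 1) y)) \<eta>
          = (if k < M then cc g (D!k) \<eta> else 1) * (if k < M then zetatil g (D!k) \<eta> else zetan g n \<eta>) / (2 * \<eta>)"
        by (cases "k < M") (simp_all add: seed_f1x[OF heta] zetan_def ne)
    qed
    also have "(\<Prod>k<M+1. if k < M then cc g (D!k) \<eta> else 1) = (\<Prod>k<M. cc g (D!k) \<eta>)"
      by simp
    also have "detm (M+1) (\<lambda>j k. (-4 * (if k < M then Etil g (D!k) / 4 else real n))^(j div 2)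
            * (if even j then (if k < M then xi g (D!k) \<eta> else lag (g - 1/2) (int n) \<eta>)
               else (if k < M then zetatil g (D!k) \<eta> else zetan g n \<eta>)))
        = detm (M+1) (amat g D n \<eta>)"
      by (rule detm_cong) (simp add: amat_def M_def En_def)
    finally show ?thesis .
  qed
  have PD_eq: "PD g D n \<eta> = 2 powr (- (real M * (real M + 1) / 2)) * detm (M + 1) (amat g D n \<eta>)
           * \<eta> powr (- real_of_int ((\<lfloor>M'\<rfloor> + 1) * (\<lfloor>M'\<rfloor> + int M - 2 * \<lfloor>real M / 2\<rfloor>)))"
  proof -
    have e2: "real (M + 1) * (real (M + 1) - 1) / 2 = real M * (real M + 1) / 2" by simp
    have "PD g D n \<eta> = 2 powr (- (real M * (real M + 1) / 2)) * detm (M + 1) (amat g D n \<eta>)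
        * (\<eta> powr (- real ((M+1) * (M+1) div 4)) * (\<eta> powr (1/2 - g)) ^ b * \<eta> powr ((real a + g + 1/2) * real b))
        * (exp \<eta> ^ a * exp (- real a * \<eta>))"
      unfolding PD_def W2 Lprod[OF heta] pcc a_def[symmetric] b_def[symmetric] e2 by (simp add: ac_simps)
    also have "exp \<eta> ^ a * exp (- real a * \<eta>) = 1" by (rule exp_cancel)
    also have "\<eta> powr (- real ((M+1) * (M+1) div 4)) * (\<eta> powr (1/2 - g)) ^ b * \<eta> powr ((real a + g + 1/2) * real b)
        = \<eta> powr (- real ((M+1) * (M+1) div 4) + real b * (1/2 - g) + (real a + g + 1/2) * real b)"
      by (rule powr3[OF heta])
    also have "- real ((M+1) * (M+1) div 4) + real b * (1/2 - g) + (real a + g + 1/2) * real b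
        = - real_of_int ((\<lfloor>M'\<rfloor> + 1) * (\<lfloor>M'\<rfloor> + int M - 2 * \<lfloor>real M / 2\<rfloor>))"
    proof -
      have "real_of_int ((\<lfloor>M'\<rfloor> + 1) * (\<lfloor>M'\<rfloor> + int M - 2 * \<lfloor>real M / 2\<rfloor>))
          = real_of_int (int ((a+b+1)*(a+b+1) div 4) - (int a + 1) * int b)"
        unfolding fl1 fl2 unfolding Mab int_id_PD ..
      also have "\<dots> = real ((M+1) * (M+1) div 4) - (real a + 1) * real b" unfolding Mab by simp
      finally show ?thesis by (simp add: algebra_simps)
    qed
    finally show ?thesis by simp
  qed
  show ?thesis using PD_eq Xi_eq by blast
qed

end
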